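(* Let $G$ be a graph with $n$ nodes, GSO $\mathbf{\Delta}\in\mathbb{R}^{n\times n}$ and GWM $\boldsymbol{A}=n\mathbf{\Delta}$. Let $h:\mathbb{R}\to\mathbb{R}$ be continuous. Then for every $\mathbf{x}\in\mathbb{C}^n$, $$\psi_{h(\mathbf{\Delta})\mathbf{x}}=h(T_{W_{\boldsymbol{A}}})\psi_{\mathbf{x}}.$$
   Context: A graph with graph shift operator (GSO) is a triple $G=(V,E,\mathbf{\Delta})$ with $V=\{1,\dots,n\}$ and $\mathbf{\Delta}\in\mathbb{R}^{n\times n}$ symmetric; its graph weight matrix (GWM) is $\boldsymbol{A}=n\mathbf{\Delta}$. For continuous $h:\mathbb{R}\to\mathbb{R}$, $h(\mathbf{\Delta})$ and $h(T)$ for bounded self-adjoint operators $T$ are defined by continuous functional calculus (via orthonormal eigendecompositions, including the kernel). For $n\in\mathbb{N}$ let $P_k=[(k-1)/n,k/n)$. For $\boldsymbol{B}\in\mathbb{R}^{n\times n}$, $W_{\boldsymbol{B}}(u,v)=\sum_{i,j}\boldsymbol{B}_{ij}\chi_{P_i}(u)\chi_{P_j}(v)$; $T_W\psi(v)=\int_0^1W(v,u)\psi(u)\,du$ on $L^2[0,1]$. For $\mathbf{x}\in\mathbb{C}^n$ the induced signal is $\psi_{\mathbf{x}}=\sum_j x_j\chi_{P_j}$. *)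

theory Defs
  imports "HOL-Analysis.Analysis"
begin

text \<open>Nodes are indexed 0..n-1 (node k+1 of the paper is index k).
  Matrices in R^{n x n} are functions nat => nat => real (only entries with indices < n matter),
  vectors in C^n are functions nat => complex. Signals on [0,1] are functions real => complex;
  L^2[0,1] elements are identified up to equality almost everywhere on [0,1].\<close>

definition orth_eigdecomp_mat :: "nat \<Rightarrow> (nat \<Rightarrow> nat \<Rightarrow> real) \<Rightarrow> (nat \<Rightarrow> nat \<Rightarrow> real) \<Rightarrow> (nat \<Rightarrow> real) \<Rightarrow> bool" where
  "orth_eigdecomp_mat n D U lam \<longleftrightarrow>
     (\<forall>i<n. \<forall>j<n. (\<Sum>k<n. U k i * U k j) = (if i = j then 1 else 0)) \<and>
     (\<forall>i<n. \<forall>j<n. D i j = (\<Sum>k<n. U i k * lam k * U j k))"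

definition mat_fun :: "(real \<Rightarrow> real) \<Rightarrow> nat \<Rightarrow> (nat \<Rightarrow> nat \<Rightarrow> real) \<Rightarrow> (nat \<Rightarrow> nat \<Rightarrow> real)" where
  "mat_fun h n D = (SOME M. \<exists>U lam. orth_eigdecomp_mat n D U lam \<and>
       M = (\<lambda>i j. \<Sum>k<n. U i k * h (lam k) * U j k))"

definition mat_vec :: "nat \<Rightarrow> (nat \<Rightarrow> nat \<Rightarrow> real) \<Rightarrow> (nat \<Rightarrow> complex) \<Rightarrow> (nat \<Rightarrow> complex)" where
  "mat_vec n M x = (\<lambda>i. \<Sum>j<n. complex_of_real (M i j) * x j)"

text \<open>P k = [k/n, (k+1)/n) (0-indexed version of the paper's P_k = [(k-1)/n, k/n)).\<close>
definition interval_P :: "nat \<Rightarrow> nat \<Rightarrow> real set" where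
  "interval_P n k = {real k / real n ..< real (Suc k) / real n}"

definition W_of :: "nat \<Rightarrow> (nat \<Rightarrow> nat \<Rightarrow> real) \<Rightarrow> real \<Rightarrow> real \<Rightarrow> real" where
  "W_of n B u v = (\<Sum>i<n. \<Sum>j<n. B i j * indicator (interval_P n i) u * indicator (interval_P n j) v)"

definition signal_of :: "nat \<Rightarrow> (nat \<Rightarrow> complex) \<Rightarrow> real \<Rightarrow> complex" where
  "signal_of n x u = (\<Sum>j<n. x j * indicator (interval_P n j) u)"

definition T_op :: "(real \<Rightarrow> real \<Rightarrow> real) \<Rightarrow> (real \<Rightarrow> complex) \<Rightarrow> real \<Rightarrow> complex" where
  "T_op W psi v = (LINT u:{0..1}|lborel. complex_of_real (W v u) * psi u)"

definition sq_int01 :: "(real \<Rightarrow> complex) \<Rightarrow> bool" where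
  "sq_int01 f \<longleftrightarrow> f \<in> borel_measurable lborel \<and>
      set_integrable lborel {0..1} (\<lambda>u. (cmod (f u))\<^sup>2)"

definition inner01 :: "(real \<Rightarrow> complex) \<Rightarrow> (real \<Rightarrow> complex) \<Rightarrow> complex" where
  "inner01 f g = (LINT u:{0..1}|lborel. f u * cnj (g u))"

definition eq01 :: "(real \<Rightarrow> complex) \<Rightarrow> (real \<Rightarrow> complex) \<Rightarrow> bool" where
  "eq01 f g \<longleftrightarrow> (AE u in lborel. u \<in> {0..1} \<longrightarrow> f u = g u)"

text \<open>A finite orthonormal eigendecomposition of T on L^2[0,1]:
  T psi = sum_k lam_k <psi,phi_k> phi_k for every psi in L^2[0,1]; the kernel of T is the
  orthogonal complement of the span of the phi_k.\<close>
definition orth_eigdecomp_op :: "((real \<Rightarrow> complex) \<Rightarrow> (real \<Rightarrow> complex)) \<Rightarrow> nat \<Rightarrow> (nat \<Rightarrow> real) \<Rightarrow> (nat \<Rightarrow> real \<Rightarrow> complex) \<Rightarrow> bool" where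
  "orth_eigdecomp_op T K lam phi \<longleftrightarrow>
     (\<forall>k<K. sq_int01 (phi k)) \<and>
     (\<forall>k<K. \<forall>l<K. inner01 (phi k) (phi l) = (if k = l then 1 else 0)) \<and>
     (\<forall>psi. sq_int01 psi \<longrightarrow>
        eq01 (T psi) (\<lambda>v. \<Sum>k<K. complex_of_real (lam k) * inner01 psi (phi k) * phi k v))"

text \<open>h(T) psi = sum_k h(lam_k) <psi,phi_k> phi_k + h(0) * (projection of psi onto ker T).\<close>
definition op_fun :: "(real \<Rightarrow> real) \<Rightarrow> ((real \<Rightarrow> complex) \<Rightarrow> (real \<Rightarrow> complex)) \<Rightarrow> (real \<Rightarrow> complex) \<Rightarrow> (real \<Rightarrow> complex)" where
  "op_fun h T psi = (SOME g. \<exists>K lam phi. orth_eigdecomp_op T K lam phi \<and>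
      g = (\<lambda>v. (\<Sum>k<K. complex_of_real (h (lam k)) * inner01 psi (phi k) * phi k v)
              + complex_of_real (h 0) * (psi v - (\<Sum>k<K. inner01 psi (phi k) * phi k v))))"

end

theory Submission
  imports Defs "Jordan_Normal_Form.Spectral_Radius"
begin


definition mm :: "nat \<Rightarrow> (nat \<Rightarrow> nat \<Rightarrow> real) \<Rightarrow> (nat \<Rightarrow> nat \<Rightarrow> real) \<Rightarrow> (nat \<Rightarrow> nat \<Rightarrow> real)" where
  "mm n A B = (\<lambda>i j. \<Sum>k<n. A i k * B k j)"
definition tr :: "(nat \<Rightarrow> nat \<Rightarrow> real) \<Rightarrow> (nat \<Rightarrow> nat \<Rightarrow> real)" where
  "tr A = (\<lambda>i j. A j i)"
definition idm :: "nat \<Rightarrow> nat \<Rightarrow> real" where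
  "idm = (\<lambda>i j. if i = j then 1 else 0)"
definition dg :: "(nat \<Rightarrow> real) \<Rightarrow> nat \<Rightarrow> nat \<Rightarrow> real" where
  "dg f = (\<lambda>i j. if i = j then f i else 0)"
definition eqn :: "nat \<Rightarrow> (nat \<Rightarrow> nat \<Rightarrow> real) \<Rightarrow> (nat \<Rightarrow> nat \<Rightarrow> real) \<Rightarrow> bool" where
  "eqn n A B \<longleftrightarrow> (\<forall>i<n. \<forall>j<n. A i j = B i j)"

lemma eqn_refl: "eqn n A A" by (simp add: eqn_def)
lemma eqn_sym: "eqn n A B \<Longrightarrow> eqn n B A" by (simp add: eqn_def)
lemma eqn_trans: "eqn n A B \<Longrightarrow> eqn n B C \<Longrightarrow> eqn n A C" by (simp add: eqn_def)

lemma mm_assoc: "mm n (mm n A B) C = mm n A (mm n B C)"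
  unfolding mm_def
  by (auto simp: sum_distrib_left sum_distrib_right mult.assoc intro!: ext sum.swap[THEN trans])

lemma mm_cong: "eqn n A A' \<Longrightarrow> eqn n B B' \<Longrightarrow> eqn n (mm n A B) (mm n A' B')"
  unfolding eqn_def mm_def by (auto intro!: sum.cong)

lemma tr_mm: "tr (mm n A B) = mm n (tr B) (tr A)"
  unfolding tr_def mm_def by (auto simp: mult.commute intro!: ext)

lemma tr_tr[simp]: "tr (tr A) = A" unfolding tr_def by simp

lemma eqn_tr: "eqn n A B \<Longrightarrow> eqn n (tr A) (tr B)" unfolding eqn_def tr_def by simp

lemma sum_delta_left: "i < (n::nat) \<Longrightarrow> (\<Sum>k<n. (if i = k then (a k::'a::comm_ring_1) else 0) * f k) = a i * f i"
  by (simp add: if_distrib[of "\<lambda>x. x * _"] sum.delta sum.delta' cong: if_cong)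

lemma sum_delta_right: "j < (n::nat) \<Longrightarrow> (\<Sum>k<n. f k * (if k = j then (a k::'a::comm_ring_1) else 0)) = f j * a j"
  by (simp add: if_distrib[of "\<lambda>x. _ * x"] sum.delta' cong: if_cong)

lemma mm_idm_left: "eqn n (mm n idm A) A"
  unfolding eqn_def mm_def idm_def by (auto simp: sum_delta_left)
lemma mm_idm_right: "eqn n (mm n A idm) A"
  unfolding eqn_def mm_def idm_def by (auto simp: sum_delta_right)

lemma mm_dg: "mm n (mm n U (dg f)) (tr U) = (\<lambda>i j. \<Sum>k<n. U i k * f k * U j k)"
  unfolding mm_def dg_def tr_def
  by (auto intro!: ext sum.cong simp: sum_delta_right)

lemma orth_eig_iff: "orth_eigdecomp_mat n D U lam \<longleftrightarrow>
   eqn n (mm n (tr U) U) idm \<and> eqn n D (mm n (mm n U (dg lam)) (tr U))"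
  unfolding orth_eigdecomp_mat_def mm_dg eqn_def
  by (auto simp: mm_def tr_def idm_def)

lemma orth_right:
  assumes "eqn n (mm n (tr U) U) idm"
  shows "eqn n (mm n U (tr U)) idm"
proof -
  let ?M = "mat n n (\<lambda>(i,j). U i j)"
  let ?T = "mat n n (\<lambda>(i,j). U j i)"
  have M: "?M \<in> carrier_mat n n" and T: "?T \<in> carrier_mat n n" by auto
  have "?T * ?M = 1\<^sub>m n"
  proof (rule eq_matI)
    fix i j assume ij: "i < dim_row (1\<^sub>m n :: real mat)" "j < dim_col (1\<^sub>m n :: real mat)"
    hence "(?T * ?M) $$ (i,j) = (\<Sum>k<n. U k i * U k j)"
      by (simp add: scalar_prod_def lessThan_atLeast0)
    also have "\<dots> = (if i = j then 1 else 0)" using assms ij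
      by (simp add: eqn_def mm_def tr_def idm_def)
    finally show "(?T * ?M) $$ (i,j) = 1\<^sub>m n $$ (i,j)" using ij by simp
  qed auto
  from mat_mult_left_right_inverse[OF T M this] have MT: "?M * ?T = 1\<^sub>m n" .
  show ?thesis unfolding eqn_def
  proof (intro allI impI)
    fix i j assume ij: "i < n" "j < n"
    have "mm n U (tr U) i j = (?M * ?T) $$ (i,j)" using ij
      by (simp add: scalar_prod_def lessThan_atLeast0 mm_def tr_def)
    also have "\<dots> = idm i j" using ij MT by (simp add: idm_def)
    finally show "mm n U (tr U) i j = idm i j" .
  qed
qed

lemma normalize_eig:
  fixes r :: "nat \<Rightarrow> real"
  assumes "i0 < n" "r i0 \<noteq> 0" "\<forall>i<n. (\<Sum>j<n. D i j * r j) = lam * r i"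
  shows "\<exists>u lam. (\<Sum>i<n. (u i)\<^sup>2) = 1 \<and> (\<forall>i<n. (\<Sum>j<n. D i j * u j) = lam * u i)"
proof -
  define N where "N = (\<Sum>i<n. (r i)\<^sup>2)"
  have "N \<ge> (r i0)\<^sup>2" unfolding N_def
    using assms(1) by (intro member_le_sum) auto
  hence Npos: "N > 0" using assms(2) by (smt (verit) zero_less_power2)
  define u where "u i = r i / sqrt N" for i
  have "(\<Sum>i<n. (u i)\<^sup>2) = (\<Sum>i<n. (r i)\<^sup>2 / N)"
    unfolding u_def using Npos by (simp add: power_divide)
  also have "\<dots> = 1" using Npos by (simp add: N_def[symmetric] sum_divide_distrib[symmetric])
  finally have 1: "(\<Sum>i<n. (u i)\<^sup>2) = 1" .
  have "\<forall>i<n. (\<Sum>j<n. D i j * u j) = lam * u i"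
  proof (intro allI impI)
    fix i assume "i < n"
    have "(\<Sum>j<n. D i j * u j) = (\<Sum>j<n. D i j * r j) / sqrt N"
      unfolding u_def by (simp add: sum_divide_distrib)
    also have "\<dots> = lam * u i" using assms(3) \<open>i < n\<close> unfolding u_def by simp
    finally show "(\<Sum>j<n. D i j * u j) = lam * u i" .
  qed
  with 1 show ?thesis by blast
qed

lemma real_eig:
  fixes D :: "nat \<Rightarrow> nat \<Rightarrow> real"
  assumes n: "0 < n" and sym: "\<forall>i<n. \<forall>j<n. D i j = D j i"
  shows "\<exists>u lam. (\<Sum>i<n. (u i)\<^sup>2) = 1 \<and> (\<forall>i<n. (\<Sum>j<n. D i j * u j) = lam * u i)"
proof -
  let ?C = "mat n n (\<lambda>(i,j). complex_of_real (D i j))"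
  have C: "?C \<in> carrier_mat n n" by simp
  from spectrum_non_empty[OF C n] obtain c where "eigenvalue ?C c" unfolding spectrum_def by auto
  then obtain v where ev: "eigenvector ?C v c" unfolding eigenvalue_def by auto
  hence v: "v \<in> carrier_vec n" "v \<noteq> 0\<^sub>v n" "?C *\<^sub>v v = c \<cdot>\<^sub>v v" unfolding eigenvector_def by auto
  define w where "w i = v $ i" for i
  have Cw: "(\<Sum>j<n. complex_of_real (D i j) * w j) = c * w i" if i: "i < n" for i
  proof -
    have "(?C *\<^sub>v v) $ i = (c \<cdot>\<^sub>v v) $ i" using v(3) by simp
    thus ?thesis using i v(1) by (simp add: scalar_prod_def lessThan_atLeast0 w_def)
  qed
  obtain i0 where i0: "i0 < n" "w i0 \<noteq> 0"
  proof -
    have "\<not> (\<forall>i<n. w i = 0)"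
    proof
      assume "\<forall>i<n. w i = 0"
      hence "v = 0\<^sub>v n" using v(1) by (intro eq_vecI) (auto simp: w_def)
      with v(2) show False by simp
    qed
    thus ?thesis using that by auto
  qed
  define S where "S = (\<Sum>i<n. cnj (w i) * (\<Sum>j<n. complex_of_real (D i j) * w j))"
  define N where "N = (\<Sum>i<n. (cmod (w i))\<^sup>2)"
  have "N \<ge> (cmod (w i0))\<^sup>2" unfolding N_def using i0(1) by (intro member_le_sum) auto
  hence Npos: "N > 0" using i0(2) by (smt (verit) zero_less_norm_iff zero_less_power2)
  have SN: "S = c * complex_of_real N"
  proof -
    have "S = (\<Sum>i<n. c * (cnj (w i) * w i))" unfolding S_def
      by (intro sum.cong) (auto simp: Cw)
    also have "\<dots> = c * (\<Sum>i<n. complex_of_real ((cmod (w i))\<^sup>2))"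
      using complex_norm_square[of "w _"]
      by (simp add: sum_distrib_left mult.commute del: of_real_power)
    finally show ?thesis by (simp add: N_def)
  qed
  have "cnj S = (\<Sum>i<n. (\<Sum>j<n. w i * complex_of_real (D i j) * cnj (w j)))"
    unfolding S_def by (simp add: sum_distrib_left mult.commute mult.left_commute)
  also have "\<dots> = (\<Sum>j<n. (\<Sum>i<n. w i * complex_of_real (D i j) * cnj (w j)))"
    by (rule sum.swap)
  also have "\<dots> = S" unfolding S_def
    using sym by (auto simp: sum_distrib_left mult.commute mult.left_commute intro!: sum.cong)
  finally have "cnj S = S" .
  hence "Im S = 0" by (metis cnj.simps(2) complex.expand neg_equal_zero)
  hence Imc: "Im c = 0" using SN Npos by simp
  define a where "a i = Re (w i)" for i
  define b where "b i = Im (w i)" for i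
  have ea: "\<forall>i<n. (\<Sum>j<n. D i j * a j) = Re c * a i"
  proof (intro allI impI)
    fix i assume "i < n"
    have "Re (\<Sum>j<n. complex_of_real (D i j) * w j) = Re (c * w i)" using Cw[OF \<open>i<n\<close>] by simp
    thus "(\<Sum>j<n. D i j * a j) = Re c * a i" using Imc by (simp add: a_def Re_sum)
  qed
  have eb: "\<forall>i<n. (\<Sum>j<n. D i j * b j) = Re c * b i"
  proof (intro allI impI)
    fix i assume "i < n"
    have "Im (\<Sum>j<n. complex_of_real (D i j) * w j) = Im (c * w i)" using Cw[OF \<open>i<n\<close>] by simp
    thus "(\<Sum>j<n. D i j * b j) = Re c * b i" using Imc by (simp add: b_def Im_sum)
  qed
  show ?thesis
  proof (cases "a i0 = 0")
    case True
    hence "b i0 \<noteq> 0" using i0(2) unfolding a_def b_def using complex.expand[of "w i0" 0] by auto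
    thus ?thesis using normalize_eig[OF i0(1) _ eb] by blast
  next
    case False
    thus ?thesis using normalize_eig[OF i0(1) _ ea] by blast
  qed
qed

lemma sum_idm_left: "i < (n::nat) \<Longrightarrow> (\<Sum>k<n. idm i k * f k) = f i"
  unfolding idm_def using sum_delta_left[of i n "\<lambda>_. 1" f] by simp
lemma sum_idm_right: "j < (n::nat) \<Longrightarrow> (\<Sum>k<n. f k * idm k j) = f j"
  unfolding idm_def using sum_delta_right[of j n f "\<lambda>_. 1"] by simp

lemma sum_lin4: "(\<Sum>k<n. a k - c1 * b k - c2 * d k + c3 * e k) =
  (\<Sum>k<n. a k) - c1 * (\<Sum>k<n. b k) - c2 * (\<Sum>k<n. d k) + c3 * (\<Sum>k<(n::nat). (e k::real))"
  by (simp add: sum.distrib sum_subtractf sum_distrib_left)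

lemma householder:
  assumes n: "0 < n" and u: "(\<Sum>i<n. (u i)\<^sup>2) = (1::real)"
  shows "\<exists>Q. eqn n (mm n (tr Q) Q) idm \<and> eqn n (mm n Q (tr Q)) idm \<and> (\<forall>i<n. Q i 0 = u i)"
proof (cases "u 0 = 1")
  case True
  have "(\<Sum>i<n. (u i)\<^sup>2) = (u 0)\<^sup>2 + (\<Sum>i\<in>{..<n} - {0}. (u i)\<^sup>2)"
    using n by (subst sum.remove[of _ 0]) auto
  hence "(\<Sum>i\<in>{..<n} - {0}. (u i)\<^sup>2) = 0" using u True by simp
  hence z: "\<forall>i\<in>{..<n} - {0}. (u i)\<^sup>2 = 0"
    by (subst sum_nonneg_eq_0_iff[symmetric]) auto
  have "\<forall>i<n. idm i 0 = u i"
  proof (intro allI impI)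
    fix i assume "i < n" thus "idm i 0 = u i" using z True by (cases "i = 0") (auto simp: idm_def)
  qed
  moreover have "tr idm = idm" by (auto simp: tr_def idm_def intro!: ext)
  hence "eqn n (mm n (tr idm) idm) idm" "eqn n (mm n idm (tr idm)) idm"
    using mm_idm_left[of n idm] by simp_all
  ultimately show ?thesis by (intro exI[of _ idm]) simp
next
  case False
  define w where "w i = u i - idm i 0" for i
  define s where "s = (\<Sum>k<n. (w k)\<^sup>2)"
  have "s = (\<Sum>k<n. (u k)\<^sup>2 - 2 * (idm 0 k * u k) + idm 0 k * idm k 0)"
    unfolding s_def w_def by (intro sum.cong) (auto simp: idm_def power2_eq_square algebra_simps)
  also have "\<dots> = 2 - 2 * u 0"
    using n by (simp add: sum.distrib sum_subtractf sum_distrib_left[symmetric] sum_idm_left u) (simp add: idm_def)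
  finally have s: "s = 2 - 2 * u 0" .
  have w0: "w 0 = u 0 - 1" by (simp add: w_def idm_def)
  have snz: "s \<noteq> 0" using False s by simp
  define H where "H i j = idm i j - 2 * w i * w j / s" for i j
  have trH: "tr H = H" unfolding tr_def H_def by (auto intro!: ext simp: idm_def mult.commute)
  have HH: "eqn n (mm n H H) idm"
    unfolding eqn_def
  proof (intro allI impI)
    fix i j assume ij: "i < n" "j < n"
    have "mm n H H i j = (\<Sum>k<n. idm i k * idm k j - (2 * w j / s) * (idm i k * w k)
        - (2 * w i / s) * (w k * idm k j) + (4 * w i * w j / s\<^sup>2) * (w k)\<^sup>2)"
      unfolding mm_def H_def by (intro sum.cong) (auto simp: algebra_simps power2_eq_square)
    also have "\<dots> = (\<Sum>k<n. idm i k * idm k j) - (2 * w j / s) * (\<Sum>k<n. idm i k * w k)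
        - (2 * w i / s) * (\<Sum>k<n. w k * idm k j) + (4 * w i * w j / s\<^sup>2) * (\<Sum>k<n. (w k)\<^sup>2)"
      by (rule sum_lin4)
    also have "\<dots> = idm i j - (2 * w j / s) * w i - (2 * w i / s) * w j + (4 * w i * w j / s\<^sup>2) * s"
      using ij by (simp only: sum_idm_left sum_idm_right s_def[symmetric])
    also have "\<dots> = idm i j" using snz by (simp add: field_simps power2_eq_square)
    finally show "mm n H H i j = idm i j" .
  qed
  have H0: "\<forall>i<n. H i 0 = u i"
  proof (intro allI impI)
    fix i assume "i < n"
    have "H i 0 = idm i 0 - 2 * w i * (u 0 - 1) / (2 - 2 * u 0)" unfolding H_def s w0 ..
    also have "\<dots> = idm i 0 + w i" using False by (simp add: field_simps)
    also have "\<dots> = u i" by (simp add: w_def)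
    finally show "H i 0 = u i" .
  qed
  show ?thesis using HH H0 trH by metis
qed

lemma spectral:
  fixes D :: "nat \<Rightarrow> nat \<Rightarrow> real"
  assumes "\<forall>i<n. \<forall>j<n. D i j = D j i"
  shows "\<exists>U lam. orth_eigdecomp_mat n D U lam"
  using assms
proof (induction n arbitrary: D)
  case 0
  then show ?case by (simp add: orth_eigdecomp_mat_def)
next
  case (Suc m)
  let ?N = "Suc m"
  obtain u l where u: "(\<Sum>i<?N. (u i)\<^sup>2) = 1" and eig: "\<forall>i<?N. (\<Sum>j<?N. D i j * u j) = l * u i"
    using real_eig[OF _ Suc.prems] by blast
  obtain Q where QQ: "eqn ?N (mm ?N (tr Q) Q) idm" and QQ': "eqn ?N (mm ?N Q (tr Q)) idm"
    and Q0: "\<forall>i<?N. Q i 0 = u i"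
    using householder[OF _ u] by blast
  define B where "B = mm ?N (tr Q) (mm ?N D Q)"
  have DQ: "mm ?N D Q i 0 = l * Q i 0" if "i < ?N" for i
    using eig Q0 that by (simp add: mm_def)
  have B0: "B i 0 = (if i = 0 then l else 0)" if "i < ?N" for i
  proof -
    have "B i 0 = (\<Sum>k<?N. tr Q i k * (l * Q k 0))" unfolding B_def mm_def[of _ "tr Q"]
      by (intro sum.cong) (auto simp: DQ)
    also have "\<dots> = l * mm ?N (tr Q) Q i 0" by (simp add: mm_def sum_distrib_left algebra_simps)
    also have "\<dots> = l * idm i 0" using QQ that by (simp add: eqn_def)
    finally show ?thesis by (simp add: idm_def)
  qed
  have Bsym: "B i j = B j i" for i j
  proof -
    have 1: "B i j = (\<Sum>k<?N. \<Sum>a<?N. Q k i * D k a * Q a j)"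
      by (simp only: B_def mm_def tr_def sum_distrib_left mult.assoc)
    have "B j i = (\<Sum>k<?N. \<Sum>a<?N. Q k j * D k a * Q a i)"
      by (simp only: B_def mm_def tr_def sum_distrib_left mult.assoc)
    also have "\<dots> = (\<Sum>a<?N. \<Sum>k<?N. Q k j * D k a * Q a i)" by (rule sum.swap)
    also have "\<dots> = (\<Sum>a<?N. \<Sum>k<?N. Q a i * D a k * Q k j)"
    proof (intro sum.cong refl)
      fix a k assume "a \<in> {..<?N}" "k \<in> {..<?N}"
      thus "Q k j * D k a * Q a i = Q a i * D a k * Q k j" using Suc.prems by simp
    qed
    finally show ?thesis using 1 by simp
  qed
  define A' where "A' i j = B (Suc i) (Suc j)" for i j
  have "\<forall>i<m. \<forall>j<m. A' i j = A' j i" unfolding A'_def using Bsym by simp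
  from Suc.IH[OF this] obtain U' lam' where IH: "orth_eigdecomp_mat m A' U' lam'" by blast
  hence U'o: "\<forall>i<m. \<forall>j<m. (\<Sum>k<m. U' k i * U' k j) = (if i = j then 1 else 0)"
    and U'd: "\<forall>i<m. \<forall>j<m. A' i j = (\<Sum>k<m. U' i k * lam' k * U' j k)"
    unfolding orth_eigdecomp_mat_def by auto
  define V where "V i j = (if i = 0 then (if j = 0 then 1 else 0) else if j = 0 then 0 else U' (i-1) (j-1))" for i j
  define lam where "lam k = (if k = 0 then l else lam' (k-1))" for k
  have VV: "eqn ?N (mm ?N (tr V) V) idm"
    unfolding eqn_def
  proof (intro allI impI)
    fix i j assume ij: "i < ?N" "j < ?N"
    have "mm ?N (tr V) V i j = V 0 i * V 0 j + (\<Sum>k<m. V (Suc k) i * V (Suc k) j)"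
      unfolding mm_def tr_def by (rule sum.lessThan_Suc_shift)
    also have "\<dots> = idm i j"
      using ij U'o by (cases i; cases j) (auto simp: V_def idm_def)
    finally show "mm ?N (tr V) V i j = idm i j" .
  qed
  have BV: "eqn ?N B (mm ?N (mm ?N V (dg lam)) (tr V))"
    unfolding eqn_def mm_dg
  proof (intro allI impI)
    fix i j assume ij: "i < ?N" "j < ?N"
    have "(\<Sum>k<?N. V i k * lam k * V j k) = V i 0 * lam 0 * V j 0 + (\<Sum>k<m. V i (Suc k) * lam (Suc k) * V j (Suc k))"
      by (rule sum.lessThan_Suc_shift)
    also have "\<dots> = B i j"
    proof (cases i)
      case 0
      then show ?thesis using B0[of j] Bsym[of 0 j] ij by (cases j) (auto simp: V_def lam_def)
    next
      case (Suc i')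
      then show ?thesis using B0[of i] ij U'd unfolding A'_def
        by (cases j) (auto simp: V_def lam_def)
    qed
    finally show "B i j = (\<Sum>k<?N. V i k * lam k * V j k)" by simp
  qed
  define U where "U = mm ?N Q V"
  have "eqn ?N (mm ?N (tr U) U) idm"
  proof -
    have a: "mm ?N (tr U) U = mm ?N (tr V) (mm ?N (mm ?N (tr Q) Q) V)"
      unfolding U_def by (simp only: tr_mm mm_assoc)
    have b: "eqn ?N (mm ?N (tr V) (mm ?N (mm ?N (tr Q) Q) V)) (mm ?N (tr V) (mm ?N idm V))"
      by (intro mm_cong eqn_refl QQ)
    have c: "eqn ?N (mm ?N (tr V) (mm ?N idm V)) (mm ?N (tr V) V)"
      by (intro mm_cong eqn_refl mm_idm_left)
    show ?thesis unfolding a by (rule eqn_trans[OF eqn_trans[OF b c] VV])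
  qed
  moreover have "eqn ?N D (mm ?N (mm ?N U (dg lam)) (tr U))"
  proof -
    have e1: "mm ?N Q (mm ?N B (tr Q)) = mm ?N (mm ?N Q (tr Q)) (mm ?N D (mm ?N Q (tr Q)))"
      unfolding B_def by (simp only: mm_assoc)
    have e2: "eqn ?N (mm ?N (mm ?N Q (tr Q)) (mm ?N D (mm ?N Q (tr Q)))) (mm ?N idm (mm ?N D idm))"
      by (intro mm_cong eqn_refl QQ')
    have e3: "eqn ?N (mm ?N idm (mm ?N D idm)) D"
      by (rule eqn_trans[OF mm_idm_left mm_idm_right])
    have e4: "eqn ?N (mm ?N Q (mm ?N B (tr Q))) (mm ?N Q (mm ?N (mm ?N (mm ?N V (dg lam)) (tr V)) (tr Q)))"
      by (intro mm_cong eqn_refl BV)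
    have e5: "mm ?N Q (mm ?N (mm ?N (mm ?N V (dg lam)) (tr V)) (tr Q)) = mm ?N (mm ?N U (dg lam)) (tr U)"
      unfolding U_def by (simp only: tr_mm mm_assoc)
    have "eqn ?N D (mm ?N Q (mm ?N B (tr Q)))"
      unfolding e1 by (rule eqn_sym, rule eqn_trans[OF e2 e3])
    from eqn_trans[OF this e4] show ?thesis unfolding e5 .
  qed
  ultimately show ?case unfolding orth_eig_iff by blast
qed


lemma set_bm01: fixes g :: "real \<Rightarrow> 'b::{banach, second_countable_topology}"
  assumes "g \<in> borel_measurable lborel" "A \<in> sets lborel" shows "set_borel_measurable lborel A g"
proof -
  have [measurable]: "g \<in> borel_measurable borel" "A \<in> sets borel" using assms by auto
  show ?thesis unfolding set_borel_measurable_def by measurable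
qed

lemma bm_cnj[measurable]: "f \<in> borel_measurable M \<Longrightarrow> (\<lambda>x. cnj (f x)) \<in> borel_measurable M"
  by (rule borel_measurable_continuous_on[where f=cnj]) (auto intro: continuous_intros)

lemma sq_int01_meas: "sq_int01 f \<Longrightarrow> f \<in> borel_measurable borel"
  unfolding sq_int01_def by simp

lemma int01_const: "set_integrable lborel {0..1::real} (\<lambda>_. c::real)"
proof -
  have "integrable lborel (\<lambda>x. c * indicator {0..1::real} x)"
    by (intro integrable_mult_right integrable_real_indicator) auto
  thus ?thesis unfolding set_integrable_def by (simp add: mult.commute)
qed

lemma sq_int01_add:
  assumes "sq_int01 f" "sq_int01 g"
  shows "sq_int01 (\<lambda>u. f u + g u)"
  unfolding sq_int01_def
proof
  note [measurable] = sq_int01_meas[OF assms(1)] sq_int01_meas[OF assms(2)]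
  show m: "(\<lambda>u. f u + g u) \<in> borel_measurable lborel" by measurable
  have i: "set_integrable lborel {0..1} (\<lambda>u. 2 * (cmod (f u))\<^sup>2 + 2 * (cmod (g u))\<^sup>2)"
    using assms unfolding sq_int01_def by (intro set_integral_add) auto
  show "set_integrable lborel {0..1} (\<lambda>u. (cmod (f u + g u))\<^sup>2)"
  proof (rule set_integrable_bound[OF i])
    show "set_borel_measurable lborel {0..1} (\<lambda>u. (cmod (f u + g u))\<^sup>2)"
      using m by (intro set_bm01) auto
    show "AE x in lborel. x \<in> {0..1} \<longrightarrow> norm ((cmod (f x + g x))\<^sup>2) \<le> norm (2 * (cmod (f x))\<^sup>2 + 2 * (cmod (g x))\<^sup>2)"
    proof (intro AE_I2 impI)
      fix x
      have t: "cmod (f x + g x) \<le> cmod (f x) + cmod (g x)" by (rule norm_triangle_ineq)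
      have "(cmod (f x + g x))\<^sup>2 \<le> (cmod (f x) + cmod (g x))\<^sup>2"
        using t by (intro power_mono) auto
      also have "\<dots> \<le> 2 * (cmod (f x))\<^sup>2 + 2 * (cmod (g x))\<^sup>2"
        using sum_squares_bound[of "cmod (f x)" "cmod (g x)"] by (simp add: power2_sum)
      finally show "norm ((cmod (f x + g x))\<^sup>2) \<le> norm (2 * (cmod (f x))\<^sup>2 + 2 * (cmod (g x))\<^sup>2)"
        by simp
    qed
  qed
qed

lemma sq_int01_scale:
  assumes "sq_int01 f"
  shows "sq_int01 (\<lambda>u. c * f u)"
proof -
  note [measurable] = sq_int01_meas[OF assms(1)]
  show ?thesis using assms unfolding sq_int01_def by (simp add: norm_mult power_mult_distrib)
qed

lemma sq_int01_zero: "sq_int01 (\<lambda>u. 0)"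
  unfolding sq_int01_def by (simp add: set_integrable_def)

lemma sq_int01_sum:
  assumes "finite I" "\<forall>i\<in>I. sq_int01 (f i)"
  shows "sq_int01 (\<lambda>u. \<Sum>i\<in>I. f i u)"
  using assms
proof (induction I rule: finite_induct)
  case empty
  then show ?case by (simp add: sq_int01_zero)
next
  case (insert x F)
  then show ?case by (simp add: sq_int01_add)
qed

lemma sq_int01_diff:
  assumes "sq_int01 f" "sq_int01 g"
  shows "sq_int01 (\<lambda>u. f u - g u)"
  using sq_int01_add[OF assms(1) sq_int01_scale[OF assms(2), of "-1"]] by simp

lemma sq_int01_indicator:
  assumes "A \<in> sets lborel"
  shows "sq_int01 (\<lambda>u. indicator A u :: complex)"
  unfolding sq_int01_def
proof
  show m: "(\<lambda>u. indicator A u :: complex) \<in> borel_measurable lborel" using assms by simp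
  show "set_integrable lborel {0..1} (\<lambda>u. (cmod (indicator A u :: complex))\<^sup>2)"
  proof (rule set_integrable_bound[OF int01_const[of 1]])
    show "set_borel_measurable lborel {0..1} (\<lambda>u. (cmod (indicator A u :: complex))\<^sup>2)"
      using m by (intro set_bm01) auto
    show "AE x in lborel. x \<in> {0..1} \<longrightarrow> norm ((cmod (indicator A x :: complex))\<^sup>2) \<le> norm (1::real)"
      by (intro AE_I2) (auto simp: indicator_def)
  qed
qed

lemma prod_int01:
  assumes "sq_int01 f" "sq_int01 g"
  shows "set_integrable lborel {0..1} (\<lambda>u. f u * cnj (g u))"
proof -
  have i: "set_integrable lborel {0..1} (\<lambda>u. (cmod (f u))\<^sup>2 + (cmod (g u))\<^sup>2)"
    using assms unfolding sq_int01_def by (intro set_integral_add) auto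
  show ?thesis
  proof (rule set_integrable_bound[OF i])
    show "set_borel_measurable lborel {0..1} (\<lambda>u. f u * cnj (g u))"
      using sq_int01_meas[OF assms(1)] sq_int01_meas[OF assms(2)] by (intro set_bm01) auto
    show "AE x in lborel. x \<in> {0..1} \<longrightarrow> norm (f x * cnj (g x)) \<le> norm ((cmod (f x))\<^sup>2 + (cmod (g x))\<^sup>2)"
    proof (intro AE_I2 impI)
      fix x
      have "norm (f x * cnj (g x)) = cmod (f x) * cmod (g x)" by (simp add: norm_mult)
      also have "\<dots> \<le> (cmod (f x))\<^sup>2 + (cmod (g x))\<^sup>2"
        using sum_squares_bound[of "cmod (f x)" "cmod (g x)"]
          mult_nonneg_nonneg[OF norm_ge_zero[of "f x"] norm_ge_zero[of "g x"]] by linarith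
      finally show "norm (f x * cnj (g x)) \<le> norm ((cmod (f x))\<^sup>2 + (cmod (g x))\<^sup>2)" by simp
    qed
  qed
qed

lemma inner01_add:
  assumes "sq_int01 f" "sq_int01 g" "sq_int01 h"
  shows "inner01 (\<lambda>u. f u + g u) h = inner01 f h + inner01 g h"
  unfolding inner01_def using prod_int01[OF assms(1,3)] prod_int01[OF assms(2,3)]
  by (simp add: distrib_right)

lemma inner01_scale: "inner01 (\<lambda>u. c * f u) h = c * inner01 f h"
  unfolding inner01_def by (simp add: mult.assoc)

lemma inner01_diff:
  assumes "sq_int01 f" "sq_int01 g" "sq_int01 h"
  shows "inner01 (\<lambda>u. f u - g u) h = inner01 f h - inner01 g h"
  unfolding inner01_def using prod_int01[OF assms(1,3)] prod_int01[OF assms(2,3)]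
  by (simp add: left_diff_distrib)

lemma inner01_sum:
  assumes "finite I" "\<forall>i\<in>I. sq_int01 (f i)" "sq_int01 h"
  shows "inner01 (\<lambda>u. \<Sum>i\<in>I. f i u) h = (\<Sum>i\<in>I. inner01 (f i) h)"
  using assms(1,2)
proof (induction I rule: finite_induct)
  case empty
  then show ?case by (simp add: inner01_def)
next
  case (insert x F)
  have "inner01 (\<lambda>u. \<Sum>i\<in>insert x F. f i u) h = inner01 (\<lambda>u. f x u + (\<Sum>i\<in>F. f i u)) h"
    using insert by simp
  also have "\<dots> = inner01 (f x) h + inner01 (\<lambda>u. \<Sum>i\<in>F. f i u) h"
    using insert assms(3) by (intro inner01_add sq_int01_sum) auto
  finally show ?case using insert by simp
qed

lemma inner01_cong:
  assumes "sq_int01 f" "sq_int01 g" "sq_int01 h" "eq01 f g"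
  shows "inner01 f h = inner01 g h"
  unfolding inner01_def
proof (rule set_lebesgue_integral_cong_AE)
  show "(\<lambda>u. f u * cnj (h u)) \<in> borel_measurable lborel" "(\<lambda>u. g u * cnj (h u)) \<in> borel_measurable lborel"
    using sq_int01_meas[OF assms(1)] sq_int01_meas[OF assms(2)] sq_int01_meas[OF assms(3)] by auto
  show "AE x\<in>{0..1} in lborel. f x * cnj (h x) = g x * cnj (h x)"
    using assms(4) unfolding eq01_def by eventually_elim auto
qed simp

lemma eq01_refl: "eq01 f f" unfolding eq01_def by simp
lemma eq01_sym: "eq01 f g \<Longrightarrow> eq01 g f" unfolding eq01_def by (auto elim: AE_mp)
lemma eq01_trans: assumes "eq01 f g" "eq01 g k" shows "eq01 f k"
  using assms unfolding eq01_def by eventually_elim auto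
lemma eq01_eq: "(\<And>u. f u = g u) \<Longrightarrow> eq01 f g" unfolding eq01_def by simp


lemma eq01_add: assumes "eq01 f g" shows "eq01 (\<lambda>v. c v + f v) (\<lambda>v. c v + g v)"
  using assms unfolding eq01_def by eventually_elim auto

lemma sum_delta_c: "j < (K::nat) \<Longrightarrow> (\<Sum>k<K. c k * (if k = j then 1 else 0)) = (c j :: complex)"
  by (simp add: if_distrib[of "\<lambda>x. _ * x"] cong: if_cong)

definition Gf :: "(real \<Rightarrow> real) \<Rightarrow> nat \<Rightarrow> (nat \<Rightarrow> real) \<Rightarrow> (nat \<Rightarrow> real \<Rightarrow> complex) \<Rightarrow> (real \<Rightarrow> complex) \<Rightarrow> real \<Rightarrow> complex" where
  "Gf f K lam phi psi = (\<lambda>v. (\<Sum>k<K. complex_of_real (f (lam k)) * inner01 psi (phi k) * phi k v)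
              + complex_of_real (f 0) * (psi v - (\<Sum>k<K. inner01 psi (phi k) * phi k v)))"

lemma op_fun_Gf: "op_fun h T psi = (SOME g. \<exists>K lam phi. orth_eigdecomp_op T K lam phi \<and> g = Gf h K lam phi psi)"
  unfolding op_fun_def Gf_def ..

lemma sq_int01_lincomb:
  fixes K :: nat
  assumes "\<forall>k<K. sq_int01 (phi k)"
  shows "sq_int01 (\<lambda>v. \<Sum>k<K. c k * phi k v)"
  using assms by (intro sq_int01_sum) (auto intro: sq_int01_scale)

lemma inner01_lincomb:
  fixes K :: nat
  assumes "\<forall>k<K. sq_int01 (phi k)" "sq_int01 h"
  shows "inner01 (\<lambda>v. \<Sum>k<K. c k * phi k v) h = (\<Sum>k<K. c k * inner01 (phi k) h)"
  using assms by (subst inner01_sum) (auto intro: sq_int01_scale simp: inner01_scale)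

lemma G1:
  fixes K :: nat
  assumes "\<forall>k<K. sq_int01 (phi k)" "sq_int01 psi"
  shows "sq_int01 (Gf f K lam phi psi)"
proof -
  have 1: "sq_int01 (\<lambda>v. \<Sum>k<K. (complex_of_real (f (lam k)) * inner01 psi (phi k)) * phi k v)"
    by (rule sq_int01_lincomb[OF assms(1)])
  have 2: "sq_int01 (\<lambda>v. \<Sum>k<K. inner01 psi (phi k) * phi k v)"
    by (rule sq_int01_lincomb[OF assms(1)])
  show ?thesis unfolding Gf_def
    by (intro sq_int01_add sq_int01_scale sq_int01_diff 1 2 assms)
qed

lemma G2:
  fixes K :: nat
  assumes "\<forall>k<K. sq_int01 (phi k)" "sq_int01 psi"
    and on: "\<forall>k<K. \<forall>l<K. inner01 (phi k) (phi l) = (if k = l then 1 else 0)"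
    and j: "j < K"
  shows "inner01 (Gf f K lam phi psi) (phi j) = complex_of_real (f (lam j)) * inner01 psi (phi j)"
proof -
  have pj: "sq_int01 (phi j)" using assms by auto
  have 1: "sq_int01 (\<lambda>v. \<Sum>k<K. (complex_of_real (f (lam k)) * inner01 psi (phi k)) * phi k v)"
    using assms by (intro sq_int01_lincomb)
  have 2: "sq_int01 (\<lambda>v. \<Sum>k<K. inner01 psi (phi k) * phi k v)"
    using assms by (intro sq_int01_lincomb)
  have i1: "inner01 (\<lambda>v. \<Sum>k<K. (complex_of_real (f (lam k)) * inner01 psi (phi k)) * phi k v) (phi j)
     = complex_of_real (f (lam j)) * inner01 psi (phi j)"
  proof -
    have "inner01 (\<lambda>v. \<Sum>k<K. (complex_of_real (f (lam k)) * inner01 psi (phi k)) * phi k v) (phi j)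
      = (\<Sum>k<K. (complex_of_real (f (lam k)) * inner01 psi (phi k)) * (if k = j then 1 else 0))"
      unfolding inner01_lincomb[OF assms(1) pj] using on j by (intro sum.cong refl) auto
    thus ?thesis using sum_delta_c[OF j] by simp
  qed
  have i2: "inner01 (\<lambda>v. \<Sum>k<K. inner01 psi (phi k) * phi k v) (phi j) = inner01 psi (phi j)"
  proof -
    have "inner01 (\<lambda>v. \<Sum>k<K. inner01 psi (phi k) * phi k v) (phi j)
      = (\<Sum>k<K. inner01 psi (phi k) * (if k = j then 1 else 0))"
      unfolding inner01_lincomb[OF assms(1) pj] using on j by (intro sum.cong refl) auto
    thus ?thesis using sum_delta_c[OF j] by simp
  qed
  have "inner01 (Gf f K lam phi psi) (phi j) =
     inner01 (\<lambda>v. \<Sum>k<K. (complex_of_real (f (lam k)) * inner01 psi (phi k)) * phi k v) (phi j)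
     + inner01 (\<lambda>v. complex_of_real (f 0) * (psi v - (\<Sum>k<K. inner01 psi (phi k) * phi k v))) (phi j)"
    unfolding Gf_def
    by (rule inner01_add[OF 1 sq_int01_scale[OF sq_int01_diff[OF assms(2) 2]] pj])
  also have "inner01 (\<lambda>v. complex_of_real (f 0) * (psi v - (\<Sum>k<K. inner01 psi (phi k) * phi k v))) (phi j)
     = complex_of_real (f 0) * (inner01 psi (phi j) - inner01 (\<lambda>v. \<Sum>k<K. inner01 psi (phi k) * phi k v) (phi j))"
    unfolding inner01_scale inner01_diff[OF assms(2) 2 pj] ..
  also have "inner01 (\<lambda>v. \<Sum>k<K. (complex_of_real (f (lam k)) * inner01 psi (phi k)) * phi k v) (phi j)
     + complex_of_real (f 0) * (inner01 psi (phi j) - inner01 (\<lambda>v. \<Sum>k<K. inner01 psi (phi k) * phi k v) (phi j))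
     = complex_of_real (f (lam j)) * inner01 psi (phi j)" using i1 i2 by simp
  finally show ?thesis .
qed

lemma G3:
  assumes D: "orth_eigdecomp_op T K lam phi" and psi: "sq_int01 psi"
  shows "eq01 (T (Gf f K lam phi psi)) (Gf (\<lambda>t. t * f t) K lam phi psi)"
proof -
  have sq: "\<forall>k<K. sq_int01 (phi k)" and on: "\<forall>k<K. \<forall>l<K. inner01 (phi k) (phi l) = (if k = l then 1 else 0)"
    and dec: "\<And>g. sq_int01 g \<Longrightarrow> eq01 (T g) (\<lambda>v. \<Sum>k<K. complex_of_real (lam k) * inner01 g (phi k) * phi k v)"
    using D unfolding orth_eigdecomp_op_def by auto
  have "eq01 (T (Gf f K lam phi psi)) (\<lambda>v. \<Sum>k<K. complex_of_real (lam k) * inner01 (Gf f K lam phi psi) (phi k) * phi k v)"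
    using dec G1[OF sq psi] by blast
  moreover have "(\<lambda>v. \<Sum>k<K. complex_of_real (lam k) * inner01 (Gf f K lam phi psi) (phi k) * phi k v)
      = Gf (\<lambda>t. t * f t) K lam phi psi"
    unfolding Gf_def[of "\<lambda>t. t * f t"]
    by (rule ext, simp, intro sum.cong refl) (simp add: G2[OF sq psi on] mult.assoc)
  ultimately show ?thesis by simp
qed

lemma G4_alg: "S1 = c * B + S2 \<Longrightarrow> S1 + (c + g0) * (p - B) = c * p + (S2 + g0 * (p - B))"
  for S1 c B S2 g0 p :: complex
  by (simp add: algebra_simps)

lemma G4: "Gf (\<lambda>t. c + g t) K lam phi psi = (\<lambda>v. complex_of_real c * psi v + Gf g K lam phi psi v)"
proof (rule ext)
  fix v
  have "(\<Sum>k<K. complex_of_real (c + g (lam k)) * inner01 psi (phi k) * phi k v)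
     = (\<Sum>k<K. complex_of_real c * (inner01 psi (phi k) * phi k v) + complex_of_real (g (lam k)) * inner01 psi (phi k) * phi k v)"
    by (intro sum.cong refl) (simp add: distrib_right)
  also have "\<dots> = complex_of_real c * (\<Sum>k<K. inner01 psi (phi k) * phi k v) + (\<Sum>k<K. complex_of_real (g (lam k)) * inner01 psi (phi k) * phi k v)"
    by (simp only: sum.distrib sum_distrib_left)
  finally have e: "(\<Sum>k<K. complex_of_real (c + g (lam k)) * inner01 psi (phi k) * phi k v)
     = complex_of_real c * (\<Sum>k<K. inner01 psi (phi k) * phi k v) + (\<Sum>k<K. complex_of_real (g (lam k)) * inner01 psi (phi k) * phi k v)" .
  show "Gf (\<lambda>t. c + g t) K lam phi psi v = complex_of_real c * psi v + Gf g K lam phi psi v"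
    unfolding Gf_def using G4_alg[OF e, of "complex_of_real (g 0)" "psi v"] by (simp only: of_real_add)
qed

lemma G5:
  assumes "\<forall>k<K. f (lam k) = g (lam k)" "f 0 = g 0"
  shows "Gf f K lam phi psi = Gf g K lam phi psi"
  unfolding Gf_def using assms by (auto intro!: ext sum.cong)

lemma T_cong:
  assumes D: "orth_eigdecomp_op T K lam phi" and "sq_int01 f" "sq_int01 g" "eq01 f g"
  shows "eq01 (T f) (T g)"
proof -
  have sq: "\<forall>k<K. sq_int01 (phi k)"
    and dec: "\<And>g. sq_int01 g \<Longrightarrow> eq01 (T g) (\<lambda>v. \<Sum>k<K. complex_of_real (lam k) * inner01 g (phi k) * phi k v)"
    using D unfolding orth_eigdecomp_op_def by auto
  have e: "(\<lambda>v. \<Sum>k<K. complex_of_real (lam k) * inner01 f (phi k) * phi k v) = (\<lambda>v. \<Sum>k<K. complex_of_real (lam k) * inner01 g (phi k) * phi k v)"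
    using inner01_cong[OF assms(2,3) _ assms(4)] sq by (auto intro!: ext sum.cong)
  show ?thesis using eq01_trans[OF dec[OF assms(2)], unfolded e, OF eq01_sym[OF dec[OF assms(3)]]] .
qed

lemma interpolation:
  fixes h :: "real \<Rightarrow> real"
  assumes "finite E"
  shows "\<exists>p. \<forall>x\<in>E. poly p x = h x"
  using assms
proof (induction E rule: finite_induct)
  case empty
  then show ?case by simp
next
  case (insert a E)
  then obtain p where p: "\<forall>x\<in>E. poly p x = h x" by blast
  define q where "q = (\<Prod>e\<in>E. [:-e, 1:])"
  have pq: "poly q x = (\<Prod>e\<in>E. x - e)" for x unfolding q_def by (simp add: poly_prod)
  have qa: "poly q a \<noteq> 0" unfolding pq using insert by (auto simp: prod_zero_iff)
  have qE: "poly q x = 0" if "x \<in> E" for x unfolding pq using insert that by (auto simp: prod_zero_iff)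
  define p' where "p' = p + Polynomial.smult ((h a - poly p a) / poly q a) q"
  have "\<forall>x\<in>insert a E. poly p' x = h x"
    using p qa qE unfolding p'_def by auto
  thus ?case by blast
qed

lemma uniq_poly:
  assumes D1: "orth_eigdecomp_op T K1 l1 p1" and D2: "orth_eigdecomp_op T K2 l2 p2" and psi: "sq_int01 psi"
  shows "eq01 (Gf (poly p) K1 l1 p1 psi) (Gf (poly p) K2 l2 p2 psi)"
proof (induction p rule: pCons_induct)
  case 0
  show ?case unfolding Gf_def by (simp add: eq01_refl)
next
  case (pCons a p)
  have sq1: "\<forall>k<K1. sq_int01 (p1 k)" using D1 unfolding orth_eigdecomp_op_def by auto
  have sq2: "\<forall>k<K2. sq_int01 (p2 k)" using D2 unfolding orth_eigdecomp_op_def by auto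
  have pe: "poly (pCons a p) = (\<lambda>t. a + t * poly p t)" by (rule ext) simp
  have "eq01 (Gf (\<lambda>t. t * poly p t) K1 l1 p1 psi) (T (Gf (poly p) K1 l1 p1 psi))"
    by (rule eq01_sym, rule G3[OF D1 psi])
  moreover have "eq01 (T (Gf (poly p) K1 l1 p1 psi)) (T (Gf (poly p) K2 l2 p2 psi))"
    by (rule T_cong[OF D1 G1[OF sq1 psi] G1[OF sq2 psi] pCons.IH])
  moreover have "eq01 (T (Gf (poly p) K2 l2 p2 psi)) (Gf (\<lambda>t. t * poly p t) K2 l2 p2 psi)"
    by (rule G3[OF D2 psi])
  ultimately have "eq01 (Gf (\<lambda>t. t * poly p t) K1 l1 p1 psi) (Gf (\<lambda>t. t * poly p t) K2 l2 p2 psi)"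
    using eq01_trans by metis
  thus ?case unfolding pe G4 by (rule eq01_add)
qed

lemma uniq:
  assumes D1: "orth_eigdecomp_op T K1 l1 p1" and D2: "orth_eigdecomp_op T K2 l2 p2" and psi: "sq_int01 psi"
  shows "eq01 (Gf h K1 l1 p1 psi) (Gf h K2 l2 p2 psi)"
proof -
  have "finite (l1 ` {..<K1} \<union> l2 ` {..<K2} \<union> {0})" by simp
  from interpolation[OF this, of h] obtain p where p: "\<forall>x\<in>l1 ` {..<K1} \<union> l2 ` {..<K2} \<union> {0}. poly p x = h x" by blast
  have "Gf h K1 l1 p1 psi = Gf (poly p) K1 l1 p1 psi" using p by (intro G5) auto
  moreover have "Gf h K2 l2 p2 psi = Gf (poly p) K2 l2 p2 psi" using p by (intro G5) auto
  ultimately show ?thesis using uniq_poly[OF D1 D2 psi] by simp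
qed


lemmas isd = sum_mult_of_bool_eq sum_of_bool_mult_eq sum_of_bool_eq sum_mult_indicator sum_indicator_mult sum_indicator_scaleR

lemma P_meas[measurable]: "interval_P n j \<in> sets borel"
  unfolding interval_P_def by simp

lemma P_meas': "interval_P n j \<in> sets lborel" by simp

lemma P_sub: assumes "j < n" shows "interval_P n j \<subseteq> {0..1}"
proof
  fix u assume "u \<in> interval_P n j"
  hence u: "real j / real n \<le> u" "u < real (Suc j) / real n" by (auto simp: interval_P_def)
  have "0 \<le> real j / real n" by simp
  hence "0 \<le> u" using u(1) by linarith
  moreover have "real (Suc j) / real n \<le> 1" using assms by (simp add: divide_le_eq_1)
  hence "u \<le> 1" using u(2) by linarith
  ultimately show "u \<in> {0..1}" using u by simp
qed

lemma P_disj: assumes "i \<noteq> j" shows "interval_P n i \<inter> interval_P n j = {}"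
proof -
  have *: "interval_P n a \<inter> interval_P n b = {}" if "a < b" for a b
  proof -
    have "real (Suc a) / real n \<le> real b / real n" using that by (intro divide_right_mono) auto
    thus ?thesis by (auto simp: interval_P_def)
  qed
  show ?thesis using assms *[of i j] *[of j i] by (cases "i < j") auto
qed

lemma ind_mult: "indicator (interval_P n i) u * indicator (interval_P n j) u =
   (if i = j then indicator (interval_P n j) u else (0::'a::comm_ring_1))"
  using P_disj[of i j n] by (auto simp: indicator_def)

lemma P_measure: assumes "j < n" shows "measure lborel (interval_P n j) = 1 / real n"
proof -
  have "real j / real n \<le> real (Suc j) / real n" by (intro divide_right_mono) auto
  hence "measure lborel (interval_P n j) = real (Suc j) / real n - real j / real n"
    unfolding interval_P_def by (rule measure_lborel_Ico)
  also have "\<dots> = 1 / real n" by (simp add: diff_divide_distrib[symmetric])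
  finally show ?thesis .
qed

lemma of_real_ind: "complex_of_real (indicator A u) = indicator A u"
  by (simp split: split_indicator)
lemma cnj_ind: "cnj (indicator A u) = indicator A u"
  by (simp split: split_indicator)

lemma int_ind: assumes "j < n"
  shows "(LINT u:{0..1}|lborel. (indicator (interval_P n j) u :: complex)) = 1 / real n"
proof -
  have "(LINT u:{0..1}|lborel. (indicator (interval_P n j) u :: complex))
      = (LINT u:{0..1}|lborel. complex_of_real (indicator (interval_P n j) u))"
    by (simp only: of_real_ind)
  also have "\<dots> = complex_of_real (LINT u:{0..1}|lborel. indicator (interval_P n j) u)"
    by (rule set_integral_complex_of_real)
  also have "(LINT u:{0..1}|lborel. indicator (interval_P n j) u) = integral\<^sup>L lborel (indicator ({0..1} \<inter> interval_P n j))"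
    unfolding set_lebesgue_integral_def by (intro Bochner_Integration.integral_cong refl) (simp split: split_indicator)
  also have "\<dots> = measure lborel (interval_P n j)"
    using P_sub[OF assms] by (simp add: Int_absorb1)
  finally show ?thesis using P_measure[OF assms] by simp
qed

lemma sq_signal: "sq_int01 (signal_of n y)"
  unfolding signal_of_def
  by (intro sq_int01_sum ballI sq_int01_scale sq_int01_indicator P_meas') simp

lemma set_integral_sum':
  fixes f :: "'i \<Rightarrow> real \<Rightarrow> complex"
  assumes "finite I" "\<forall>i\<in>I. set_integrable lborel A (f i)"
  shows "(LINT u:A|lborel. \<Sum>i\<in>I. f i u) = (\<Sum>i\<in>I. LINT u:A|lborel. f i u)"
    and "set_integrable lborel A (\<lambda>u. \<Sum>i\<in>I. f i u)"
  using assms unfolding set_lebesgue_integral_def set_integrable_def scaleR_sum_right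
  by (auto intro!: integral_sum integrable_sum simp del: isd)

definition cf :: "nat \<Rightarrow> (real \<Rightarrow> complex) \<Rightarrow> nat \<Rightarrow> complex" where
  "cf n psi j = (LINT u:{0..1}|lborel. psi u * indicator (interval_P n j) u)"

lemma int_psi_ind: "sq_int01 psi \<Longrightarrow> set_integrable lborel {0..1} (\<lambda>u. psi u * indicator (interval_P n j) u)"
  using prod_int01[OF _ sq_int01_indicator[OF P_meas'], of psi n j] by (simp add: cnj_ind)

lemma cf_signal: assumes "j < n" shows "cf n (signal_of n x) j = x j / real n"
proof -
  have "(\<lambda>u. signal_of n x u * indicator (interval_P n j) u) = (\<lambda>u. x j * indicator (interval_P n j) u)"
  proof
    fix u
    have "signal_of n x u * indicator (interval_P n j) u
        = (\<Sum>i<n. x i * (indicator (interval_P n i) u * indicator (interval_P n j) u))"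
      unfolding signal_of_def by (simp add: sum_distrib_right mult.assoc del: isd)
    also have "\<dots> = (\<Sum>i<n. if i = j then x i * indicator (interval_P n j) u else 0)"
      by (intro sum.cong refl) (simp add: ind_mult)
    also have "\<dots> = x j * indicator (interval_P n j) u" using assms by simp
    finally show "signal_of n x u * indicator (interval_P n j) u = x j * indicator (interval_P n j) u" .
  qed
  thus ?thesis unfolding cf_def using int_ind[OF assms] by simp
qed

lemma inner_signal:
  assumes "sq_int01 psi"
  shows "inner01 psi (signal_of n y) = (\<Sum>j<n. cnj (y j) * cf n psi j)"
proof -
  have "(\<lambda>u. psi u * cnj (signal_of n y u)) = (\<lambda>u. \<Sum>j<n. cnj (y j) * (psi u * indicator (interval_P n j) u))"
    unfolding signal_of_def by (auto simp: cnj_sum cnj_ind sum_distrib_left mult.commute mult.left_commute simp del: isd intro!: ext)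
  moreover have "(LINT u:{0..1}|lborel. \<Sum>j<n. cnj (y j) * (psi u * indicator (interval_P n j) u))
     = (\<Sum>j<n. LINT u:{0..1}|lborel. cnj (y j) * (psi u * indicator (interval_P n j) u))"
    using int_psi_ind[OF assms] by (intro set_integral_sum'(1)) auto
  ultimately show ?thesis unfolding inner01_def cf_def by simp
qed

lemma T_signal:
  assumes "sq_int01 psi"
  shows "T_op (W_of n A) psi v = signal_of n (\<lambda>i. \<Sum>j<n. complex_of_real (A i j) * cf n psi j) v"
proof -
  define c where "c i j = complex_of_real (A i j * indicator (interval_P n i) v)" for i j
  have pw: "complex_of_real (W_of n A v u) * psi u = (\<Sum>i<n. \<Sum>j<n. c i j * (psi u * indicator (interval_P n j) u))" for u
  proof -
    have "complex_of_real (W_of n A v u) * psi u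
       = (\<Sum>i<n. \<Sum>j<n. complex_of_real (A i j * indicator (interval_P n i) v * indicator (interval_P n j) u) * psi u)"
      unfolding W_of_def by (simp only: of_real_sum sum_distrib_right)
    also have "\<dots> = (\<Sum>i<n. \<Sum>j<n. c i j * (psi u * indicator (interval_P n j) u))"
      unfolding c_def by (intro sum.cong refl) (simp split: split_indicator)
    finally show ?thesis .
  qed
  have ii: "set_integrable lborel {0..1} (\<lambda>u. c i j * (psi u * indicator (interval_P n j) u))" for i j
    using int_psi_ind[OF assms] by simp
  have "T_op (W_of n A) psi v = (LINT u:{0..1}|lborel. \<Sum>i<n. \<Sum>j<n. c i j * (psi u * indicator (interval_P n j) u))"
    unfolding T_op_def pw ..
  also have "\<dots> = (\<Sum>i<n. LINT u:{0..1}|lborel. \<Sum>j<n. c i j * (psi u * indicator (interval_P n j) u))"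
    using ii by (intro set_integral_sum'(1) ballI set_integral_sum'(2)) auto
  also have "\<dots> = (\<Sum>i<n. \<Sum>j<n. c i j * cf n psi j)"
    unfolding cf_def using ii by (intro sum.cong refl, subst set_integral_sum'(1)) auto
  also have "\<dots> = signal_of n (\<lambda>i. \<Sum>j<n. complex_of_real (A i j) * cf n psi j) v"
    unfolding signal_of_def c_def
    by (intro sum.cong refl) (simp add: sum_distrib_right mult.commute mult.left_commute del: isd split: split_indicator)
  finally show ?thesis .
qed

lemma signal_lincomb:
  "(\<Sum>k<K. c k * signal_of n (y k) v) = signal_of n (\<lambda>i. \<Sum>k<K. c k * y k i) v"
  unfolding signal_of_def
  by (simp add: sum_distrib_left sum_distrib_right mult.assoc del: isd) (rule sum.swap)

lemma signal_cong: "(\<forall>i<n. y i = z i) \<Longrightarrow> signal_of n y = signal_of n z"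
  unfolding signal_of_def by (auto intro!: ext sum.cong)


definition Phi :: "nat \<Rightarrow> (nat \<Rightarrow> nat \<Rightarrow> real) \<Rightarrow> nat \<Rightarrow> real \<Rightarrow> complex" where
  "Phi n U k = signal_of n (\<lambda>i. complex_of_real (sqrt (real n) * U i k))"

lemma inner_Phi:
  assumes "sq_int01 psi"
  shows "inner01 psi (Phi n U k) = (\<Sum>j<n. complex_of_real (sqrt (real n) * U j k) * cf n psi j)"
  unfolding Phi_def inner_signal[OF assms] by simp

lemma Phi_expand:
  assumes psi: "sq_int01 psi"
  shows "(\<Sum>k<n. complex_of_real (g k) * inner01 psi (Phi n U k) * Phi n U k v)
    = signal_of n (\<lambda>i. \<Sum>j<n. complex_of_real (real n * (\<Sum>k<n. U i k * g k * U j k)) * cf n psi j) v"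
proof -
  have "(\<Sum>k<n. complex_of_real (g k) * inner01 psi (Phi n U k) * Phi n U k v)
     = signal_of n (\<lambda>i. \<Sum>k<n. (complex_of_real (g k) * inner01 psi (Phi n U k)) * complex_of_real (sqrt (real n) * U i k)) v"
    unfolding Phi_def[of n U] by (rule signal_lincomb)
  also have "\<dots> = signal_of n (\<lambda>i. \<Sum>j<n. complex_of_real (real n * (\<Sum>k<n. U i k * g k * U j k)) * cf n psi j) v"
  proof -
    have "(\<Sum>k<n. (complex_of_real (g k) * inner01 psi (Phi n U k)) * complex_of_real (sqrt (real n) * U i k))
       = (\<Sum>j<n. complex_of_real (real n * (\<Sum>k<n. U i k * g k * U j k)) * cf n psi j)" for i
    proof -
      have ss: "sqrt (real n) * sqrt (real n) = real n" by simp
      have pt: "complex_of_real (g k) * (complex_of_real (sqrt (real n) * U j k) * c) * complex_of_real (sqrt (real n) * U i k)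
          = complex_of_real (real n * (U i k * g k * U j k)) * c" for j k c
      proof -
        have "complex_of_real (g k) * (complex_of_real (sqrt (real n) * U j k) * c) * complex_of_real (sqrt (real n) * U i k)
           = complex_of_real (g k * (sqrt (real n) * U j k) * (sqrt (real n) * U i k)) * c"
          by (simp add: mult_ac)
        also have "g k * (sqrt (real n) * U j k) * (sqrt (real n) * U i k) = (sqrt (real n) * sqrt (real n)) * (U i k * g k * U j k)"
          by (simp add: mult_ac)
        finally show ?thesis unfolding ss .
      qed
      have "(\<Sum>k<n. (complex_of_real (g k) * inner01 psi (Phi n U k)) * complex_of_real (sqrt (real n) * U i k))
         = (\<Sum>k<n. \<Sum>j<n. complex_of_real (g k) * (complex_of_real (sqrt (real n) * U j k) * cf n psi j) * complex_of_real (sqrt (real n) * U i k))"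
        unfolding inner_Phi[OF psi] by (simp add: sum_distrib_left sum_distrib_right del: isd)
      also have "\<dots> = (\<Sum>j<n. \<Sum>k<n. complex_of_real (real n * (U i k * g k * U j k)) * cf n psi j)"
        unfolding pt by (rule sum.swap)
      also have "\<dots> = (\<Sum>j<n. complex_of_real (real n * (\<Sum>k<n. U i k * g k * U j k)) * cf n psi j)"
        by (simp add: sum_distrib_left sum_distrib_right of_real_sum del: isd)
      finally show ?thesis .
    qed
    thus ?thesis by simp
  qed
  finally show ?thesis .
qed

lemma D_decomp:
  assumes orth: "orth_eigdecomp_mat n Delta U mu"
  shows "orth_eigdecomp_op (T_op (W_of n (\<lambda>i j. real n * Delta i j))) n mu (Phi n U)"
proof -
  have Uo: "\<forall>i<n. \<forall>j<n. (\<Sum>k<n. U k i * U k j) = (if i = j then 1 else 0)"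
    and Ud: "\<forall>i<n. \<forall>j<n. Delta i j = (\<Sum>k<n. U i k * mu k * U j k)"
    using orth unfolding orth_eigdecomp_mat_def by auto
  have sq: "\<forall>k<n. sq_int01 (Phi n U k)" unfolding Phi_def by (simp add: sq_signal)
  have on: "\<forall>k<n. \<forall>l<n. inner01 (Phi n U k) (Phi n U l) = (if k = l then 1 else 0)"
  proof (intro allI impI)
    fix k l assume kl: "k < n" "l < n"
    hence npos: "real n > 0" by simp
    have "inner01 (Phi n U k) (Phi n U l)
       = (\<Sum>j<n. complex_of_real (sqrt (real n) * U j l) * (complex_of_real (sqrt (real n) * U j k) / real n))"
      unfolding inner_Phi[OF sq[rule_format, OF kl(1)]] unfolding Phi_def
      by (intro sum.cong refl) (simp add: cf_signal)
    also have "\<dots> = (\<Sum>j<n. complex_of_real (U j k * U j l))"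
    proof (intro sum.cong refl)
      fix j
      have "(sqrt (real n) * U j l) * ((sqrt (real n) * U j k) / real n) = (sqrt (real n) * sqrt (real n)) * (U j k * U j l) / real n"
        by (simp add: divide_inverse mult_ac)
      also have "\<dots> = U j k * U j l" using npos by simp
      finally have r: "(sqrt (real n) * U j l) * ((sqrt (real n) * U j k) / real n) = U j k * U j l" .
      have "complex_of_real (sqrt (real n) * U j l) * (complex_of_real (sqrt (real n) * U j k) / real n)
          = complex_of_real ((sqrt (real n) * U j l) * ((sqrt (real n) * U j k) / real n))"
        by (simp only: of_real_mult of_real_divide of_real_of_nat_eq)
      also have "\<dots> = complex_of_real (U j k * U j l)" unfolding r ..
      finally show "complex_of_real (sqrt (real n) * U j l) * (complex_of_real (sqrt (real n) * U j k) / real n)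
          = complex_of_real (U j k * U j l)" .
    qed
    also have "\<dots> = complex_of_real (\<Sum>j<n. U j k * U j l)" by (simp only: of_real_sum)
    also have "\<dots> = (if k = l then 1 else 0)" using Uo kl by simp
    finally show "inner01 (Phi n U k) (Phi n U l) = (if k = l then 1 else 0)" .
  qed
  have dec: "eq01 (T_op (W_of n (\<lambda>i j. real n * Delta i j)) psi)
         (\<lambda>v. \<Sum>k<n. complex_of_real (mu k) * inner01 psi (Phi n U k) * Phi n U k v)" if psi: "sq_int01 psi" for psi
  proof (rule eq01_eq)
    fix v
    have "T_op (W_of n (\<lambda>i j. real n * Delta i j)) psi v
        = signal_of n (\<lambda>i. \<Sum>j<n. complex_of_real (real n * Delta i j) * cf n psi j) v"
      by (rule T_signal[OF psi])
    also have "\<dots> = signal_of n (\<lambda>i. \<Sum>j<n. complex_of_real (real n * (\<Sum>k<n. U i k * mu k * U j k)) * cf n psi j) v"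
    proof (rule arg_cong[where f="\<lambda>y. y v"], rule signal_cong, intro allI impI)
      fix i assume i: "i < n"
      show "(\<Sum>j<n. complex_of_real (real n * Delta i j) * cf n psi j)
          = (\<Sum>j<n. complex_of_real (real n * (\<Sum>k<n. U i k * mu k * U j k)) * cf n psi j)"
      proof (rule sum.cong[OF refl])
        fix j assume "j \<in> {..<n}"
        hence j: "j < n" by simp
        have "Delta i j = (\<Sum>k<n. U i k * mu k * U j k)" using Ud i j by blast
        thus "complex_of_real (real n * Delta i j) * cf n psi j
          = complex_of_real (real n * (\<Sum>k<n. U i k * mu k * U j k)) * cf n psi j" by (simp only:)
      qed
    qed
    also have "\<dots> = (\<Sum>k<n. complex_of_real (mu k) * inner01 psi (Phi n U k) * Phi n U k v)"
      by (rule Phi_expand[OF psi, symmetric])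
    finally show "T_op (W_of n (\<lambda>i j. real n * Delta i j)) psi v = (\<Sum>k<n. complex_of_real (mu k) * inner01 psi (Phi n U k) * Phi n U k v)" .
  qed
  show ?thesis unfolding orth_eigdecomp_op_def using sq on dec by blast
qed



lemma cn: "0 < n \<Longrightarrow> complex_of_real (real n * a) * (c / complex_of_real (real n)) = complex_of_real a * c"
  by (simp add: field_simps)

theorem proposition4p5:
  fixes n :: nat and Delta :: "nat \<Rightarrow> nat \<Rightarrow> real" and h :: "real \<Rightarrow> real"
    and x :: "nat \<Rightarrow> complex"
  assumes "0 < n"
    and "\<forall>i<n. \<forall>j<n. Delta i j = Delta j i"
    and "continuous_on UNIV h"
  shows "eq01 (signal_of n (mat_vec n (mat_fun h n Delta) x))
              (op_fun h (T_op (W_of n (\<lambda>i j. real n * Delta i j))) (signal_of n x))"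
proof -
  let ?T = "T_op (W_of n (\<lambda>i j. real n * Delta i j))"
  let ?psi = "signal_of n x"
  obtain U mu where Umu: "orth_eigdecomp_mat n Delta U mu"
    and M: "mat_fun h n Delta = (\<lambda>i j. \<Sum>k<n. U i k * h (mu k) * U j k)"
  proof -
    from spectral[OF assms(2)] obtain U0 l0 where "orth_eigdecomp_mat n Delta U0 l0" by blast
    hence ex: "\<exists>M U lam. orth_eigdecomp_mat n Delta U lam \<and> M = (\<lambda>i j. \<Sum>k<n. U i k * h (lam k) * U j k)"
      by blast
    have "\<exists>U lam. orth_eigdecomp_mat n Delta U lam \<and> mat_fun h n Delta = (\<lambda>i j. \<Sum>k<n. U i k * h (lam k) * U j k)"
      unfolding mat_fun_def by (rule someI_ex[OF ex])
    thus ?thesis using that by blast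
  qed
  have o1: "eqn n (mm n (tr U) U) idm" using Umu unfolding orth_eig_iff by blast
  have o2: "eqn n (mm n U (tr U)) idm" by (rule orth_right[OF o1])
  have UUt: "\<forall>i<n. \<forall>j<n. (\<Sum>k<n. U i k * U j k) = (if i = j then 1 else 0)"
    using o2 unfolding eqn_def mm_def tr_def idm_def .
  have D2: "orth_eigdecomp_op ?T n mu (Phi n U)" by (rule D_decomp[OF Umu])
  obtain K l p where D1: "orth_eigdecomp_op ?T K l p" and OF: "op_fun h ?T ?psi = Gf h K l p ?psi"
  proof -
    have ex: "\<exists>g K lam phi. orth_eigdecomp_op ?T K lam phi \<and> g = Gf h K lam phi ?psi" using D2 by blast
    have "\<exists>K lam phi. orth_eigdecomp_op ?T K lam phi \<and> op_fun h ?T ?psi = Gf h K lam phi ?psi"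
      unfolding op_fun_Gf by (rule someI_ex[OF ex])
    thus ?thesis using that by blast
  qed
  have psi: "sq_int01 ?psi" by (rule sq_signal)
  have LHS: "signal_of n (mat_vec n (mat_fun h n Delta) x) = Gf h n mu (Phi n U) ?psi"
  proof (rule ext)
    fix v
    have e1: "(\<Sum>k<n. complex_of_real (h (mu k)) * inner01 ?psi (Phi n U k) * Phi n U k v)
        = signal_of n (mat_vec n (mat_fun h n Delta) x) v"
    proof -
      have "(\<Sum>k<n. complex_of_real (h (mu k)) * inner01 ?psi (Phi n U k) * Phi n U k v)
        = signal_of n (\<lambda>i. \<Sum>j<n. complex_of_real (real n * (\<Sum>k<n. U i k * h (mu k) * U j k)) * cf n ?psi j) v"
        by (rule Phi_expand[OF psi])
      also have "\<dots> = signal_of n (mat_vec n (mat_fun h n Delta) x) v"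
        unfolding M mat_vec_def
      proof (rule arg_cong[where f="\<lambda>y. y v"], rule signal_cong, intro allI impI)
        fix i assume i: "i < n"
        show "(\<Sum>j<n. complex_of_real (real n * (\<Sum>k<n. U i k * h (mu k) * U j k)) * cf n ?psi j)
            = (\<Sum>j<n. complex_of_real (\<Sum>k<n. U i k * h (mu k) * U j k) * x j)"
        proof (rule sum.cong[OF refl])
          fix j assume "j \<in> {..<n}"
          hence j: "j < n" by simp
          show "complex_of_real (real n * (\<Sum>k<n. U i k * h (mu k) * U j k)) * cf n ?psi j
            = complex_of_real (\<Sum>k<n. U i k * h (mu k) * U j k) * x j"
            unfolding cf_signal[OF j] by (rule cn[OF assms(1)])
        qed
      qed
      finally show ?thesis .
    qed
    have "(\<Sum>k<n. inner01 ?psi (Phi n U k) * Phi n U k v)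
        = (\<Sum>k<n. complex_of_real 1 * inner01 ?psi (Phi n U k) * Phi n U k v)" by (simp only: of_real_1 mult_1_left)
    also have "\<dots> = signal_of n (\<lambda>i. \<Sum>j<n. complex_of_real (real n * (\<Sum>k<n. U i k * 1 * U j k)) * cf n ?psi j) v"
      by (rule Phi_expand[OF psi])
    also have "\<dots> = ?psi v"
    proof (rule arg_cong[where f="\<lambda>y. y v"], rule signal_cong, intro allI impI)
      fix i assume i: "i < n"
      have "(\<Sum>j<n. complex_of_real (real n * (\<Sum>k<n. U i k * 1 * U j k)) * cf n ?psi j)
          = (\<Sum>j<n. if j = i then x j else 0)"
      proof (rule sum.cong[OF refl])
        fix j assume "j \<in> {..<n}"
        hence j: "j < n" by simp
        have a: "complex_of_real (real n * (\<Sum>k<n. U i k * 1 * U j k)) * cf n ?psi j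
            = complex_of_real (\<Sum>k<n. U i k * 1 * U j k) * x j"
          unfolding cf_signal[OF j] by (rule cn[OF assms(1)])
        have b: "(\<Sum>k<n. U i k * 1 * U j k) = (if i = j then 1 else 0)"
          using UUt i j by simp
        show "complex_of_real (real n * (\<Sum>k<n. U i k * 1 * U j k)) * cf n ?psi j
            = (if j = i then x j else 0)" unfolding a unfolding b by (cases "i = j") auto
      qed
      also have "\<dots> = x i" using i by simp
      finally show "(\<Sum>j<n. complex_of_real (real n * (\<Sum>k<n. U i k * 1 * U j k)) * cf n ?psi j) = x i" .
    qed
    finally have e2: "(\<Sum>k<n. inner01 ?psi (Phi n U k) * Phi n U k v) = ?psi v" .
    show "signal_of n (mat_vec n (mat_fun h n Delta) x) v = Gf h n mu (Phi n U) ?psi v"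
      unfolding Gf_def e1 e2 by simp
  qed
  show ?thesis unfolding LHS OF by (rule uniq[OF D2 D1 psi])
qed


end
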